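(* Let $i,j,m$ be non-negative integers. Then \[2^{2m}\,C(i,j)=\sum_{b=0}^m\binom{m}{b}\,C(i+b,\,m+j-b).\]
   Context: $C(p,q)=\frac{(2p)!(2q)!}{p!(p+q)!q!}$ for non-negative integers $p,q$. *)

theory Defs
  imports Complex_Main
begin

definition superC :: "nat \<Rightarrow> nat \<Rightarrow> rat" where
  "superC p q = (fact (2*p) * fact (2*q)) / (fact p * fact (p+q) * fact q)"

end

theory Submission
  imports Defs
begin

lemma alg: fixes A B F G S x y :: rat
  assumes "F \<noteq> 0" "G \<noteq> 0" "S \<noteq> 0" "x + 1 \<noteq> 0" "x + y + 1 \<noteq> 0"
  shows "((2*x+2)*(2*x+1)*A) * B / (((x+1)*F) * ((x+y+1)*S) * G) = A * B/(F * S * G) * (2*(2*x+1)/(x+y+1))"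
proof -
  have "(2*x+2) = 2*(x+1)" by simp
  then show ?thesis using assms by (simp add: divide_simps) (simp add: algebra_simps)
qed
lemma a: "superC (Suc i) j = superC i j * (2 * (2 * of_nat i + 1) / (of_nat i + of_nat j + 1))"
proof -
  have 1: "fact (2 * Suc i) = ((2*of_nat i+2) * (2*of_nat i+1) * fact (2*i) :: rat)"
    by (simp add: fact_Suc algebra_simps)
  have 2: "fact (Suc i + j) = ((of_nat i+of_nat j+1) * fact (i+j) :: rat)"
    by (simp add: fact_Suc del: of_nat_Suc)
  have 3: "fact (Suc i) = ((of_nat i+1) * fact i :: rat)" by (simp add: fact_Suc del: of_nat_Suc)
  have n1: "(of_nat i + 1::rat) \<noteq> 0" "(of_nat i + of_nat j + 1::rat) \<noteq> 0"
    by (simp_all add: add_nonneg_eq_0_iff)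
  show ?thesis unfolding superC_def 1 2 3 by (rule alg) (use n1 in auto)
qed
lemma b: "superC i (Suc j) = superC i j * (2 * (2 * of_nat j + 1) / (of_nat i + of_nat j + 1))"
proof -
  have "superC i j = superC j i" unfolding superC_def by (simp add: add.commute mult.commute)
  moreover have "superC i (Suc j) = superC (Suc j) i" unfolding superC_def by (simp add: add.commute mult.commute)
  ultimately show ?thesis using a[of j i] by (simp add: add.commute)
qed
lemma superC_rec: "superC (Suc i) j + superC i (Suc j) = 4 * superC i j"
proof -
  have n: "(of_nat i + of_nat j + 1::rat) \<noteq> 0" by (simp add: add_nonneg_eq_0_iff)
  have "superC (Suc i) j + superC i (Suc j) = superC i j * ((2 * (2 * of_nat i + 1) + 2 * (2 * of_nat j + 1)) / (of_nat i + of_nat j + 1))"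
    unfolding a b by (simp add: add_divide_distrib distrib_left)
  also have "(2 * (2 * of_nat i + 1) + 2 * (2 * of_nat j + 1)) / (of_nat i + of_nat j + 1) = (4::rat)"
    using n by (simp add: divide_simps algebra_simps)
  finally show ?thesis by simp
qed

lemma pascal_sum:
  fixes g :: "nat \<Rightarrow> rat"
  shows "(\<Sum>b\<le>Suc m. of_nat (Suc m choose b) * g b)
       = (\<Sum>b\<le>m. of_nat (m choose b) * (g b + g (Suc b)))"
proof -
  have "(\<Sum>b\<le>Suc m. of_nat (Suc m choose b) * g b)
     = g 0 + (\<Sum>k\<le>m. of_nat (Suc m choose Suc k) * g (Suc k))"
    by (subst sum.atMost_Suc_shift) simp
  also have "\<dots> = g 0 + (\<Sum>k\<le>m. of_nat (m choose k) * g (Suc k))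
                     + (\<Sum>k\<le>m. of_nat (m choose Suc k) * g (Suc k))"
    by (simp add: sum.distrib algebra_simps)
  also have "(\<Sum>k\<le>m. of_nat (m choose Suc k) * g (Suc k)) = (\<Sum>k<m. of_nat (m choose Suc k) * g (Suc k))"
    by (simp add: lessThan_Suc_atMost[symmetric])
  also have "(\<Sum>b\<le>m. of_nat (m choose b) * g b) = g 0 + (\<Sum>k<m. of_nat (m choose Suc k) * g (Suc k))"
    by (subst lessThan_Suc_atMost[symmetric], subst sum.lessThan_Suc_shift, simp)
  ultimately show ?thesis by (simp add: sum.distrib algebra_simps)
qed
lemma main:
  "\<forall>i j. 4 ^ m * superC i j = (\<Sum>b\<le>m. of_nat (m choose b) * superC (i+b) (m+j-b))"
proof (induction m)
  case 0
  then show ?case by simp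
next
  case (Suc m)
  show ?case
  proof (intro allI)
    fix i j
    have "4 ^ Suc m * superC i j = 4 ^ m * superC (Suc i) j + 4 ^ m * superC i (Suc j)"
      proof -
      have "4 ^ Suc m * superC i j = 4 ^ m * (4 * superC i j)" by simp
      then show ?thesis unfolding superC_rec[symmetric] by (simp add: distrib_left)
    qed
    also have "\<dots> = (\<Sum>b\<le>m. of_nat (m choose b) * superC (Suc i+b) (m+j-b))
                   + (\<Sum>b\<le>m. of_nat (m choose b) * superC (i+b) (m+Suc j-b))"
      using Suc.IH by presburger
    also have "\<dots> = (\<Sum>b\<le>m. of_nat (m choose b) * (superC (i+b) (Suc m+j-b) + superC (i + Suc b) (Suc m+j-Suc b)))"
      unfolding sum.distrib[symmetric] by (rule sum.cong) (auto simp: algebra_simps Suc_diff_le)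
    also have "\<dots> = (\<Sum>b\<le>Suc m. of_nat (Suc m choose b) * superC (i+b) (Suc m+j-b))"
      by (rule pascal_sum[symmetric])
    finally show "4 ^ Suc m * superC i j = (\<Sum>b\<le>Suc m. of_nat (Suc m choose b) * superC (i+b) (Suc m+j-b))" .
  qed
qed

theorem lemma5p5:
  fixes i j m :: nat
  shows "2 ^ (2*m) * superC i j = (\<Sum>b=0..m. of_nat (m choose b) * superC (i+b) (m+j-b))"
  using main[of m] by (simp add: power_mult atLeast0AtMost)
end
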